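(* Every strong Euler–Gauss sequence is a Gauss sequence.
   Context: $\mu$ is the Möbius function. For an integer sequence $(a_n)$ and $n\ge1$, $A_n^+=\prod_{d\mid n,\ \mu(d)=1} a_{n/d}$ and $A_n^-=\prod_{d\mid n,\ \mu(d)=-1} a_{n/d}$ (empty products equal $1$). An integer sequence is a strong Euler–Gauss sequence if for all $n\ge1$, $\left(\frac{A_n^-}{\gcd(A_n^+,A_n^-)}\right)^{-1}\equiv\left(\frac{A_n^+}{\gcd(A_n^+,A_n^-)}\right)^{-1}\pmod n$, where $x^{-1}$ denotes the inverse of $x$ modulo $n$ (so the two quotients are required to be invertible modulo $n$). A Gauss sequence is an integer sequence with $\sum_{d\mid n}\mu(d)a_{n/d}\equiv0\pmod n$ for all $n\ge1$. *)

theory Defs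
  imports "HOL-Number_Theory.Number_Theory" "HOL-Computational_Algebra.Squarefree"
begin

definition moebius_mu :: "nat \<Rightarrow> int" where
  "moebius_mu d = (if squarefree d then (-1) ^ card (prime_factors d) else 0)"

definition A_plus :: "(nat \<Rightarrow> int) \<Rightarrow> nat \<Rightarrow> int" where
  "A_plus a n = (\<Prod>d\<in>{d. d dvd n \<and> moebius_mu d = 1}. a (n div d))"

definition A_minus :: "(nat \<Rightarrow> int) \<Rightarrow> nat \<Rightarrow> int" where
  "A_minus a n = (\<Prod>d\<in>{d. d dvd n \<and> moebius_mu d = -1}. a (n div d))"

text \<open>Inverse of x modulo n (meaningful when x is coprime to n).\<close>
definition inv_mod :: "nat \<Rightarrow> int \<Rightarrow> int" where
  "inv_mod n x = (SOME y. [x * y = 1] (mod int n))"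

definition strong_euler_gauss :: "(nat \<Rightarrow> int) \<Rightarrow> bool" where
  "strong_euler_gauss a \<longleftrightarrow>
    (\<forall>n\<ge>1. let g = gcd (A_plus a n) (A_minus a n);
               P = A_plus a n div g; M = A_minus a n div g in
      coprime P (int n) \<and> coprime M (int n) \<and>
      [inv_mod n M = inv_mod n P] (mod int n))"

definition gauss_sequence :: "(nat \<Rightarrow> int) \<Rightarrow> bool" where
  "gauss_sequence a \<longleftrightarrow>
    (\<forall>n\<ge>1. [(\<Sum>d | d dvd n. moebius_mu d * a (n div d)) = 0] (mod int n))"

end

theory Submission
  imports Defs
begin

definition pe :: "nat \<Rightarrow> nat \<Rightarrow> int \<Rightarrow> int \<Rightarrow> bool" where
  "pe p k x y \<longleftrightarrow> (\<exists>v U W. x = int p ^ v * U \<and> y = int p ^ v * W \<and>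
     \<not> int p dvd U \<and> \<not> int p dvd W \<and> [U = W] (mod int p ^ k))"

lemma decomp:
  assumes "prime p" "(x::int) \<noteq> 0"
  shows "\<exists>v U. x = int p ^ v * U \<and> \<not> int p dvd U"
proof -
  have "p > 1" using assms(1) by (rule prime_gt_1_nat)
  then have "\<not> is_unit (int p)" by simp
  obtain y where "x = int p ^ multiplicity (int p) x * y" "\<not> int p dvd y"
    using multiplicity_decompose'[OF assms(2) \<open>\<not> is_unit (int p)\<close>] by blast
  then show ?thesis by blast
qed

lemma decomp_unique:
  assumes "prime p" "int p ^ a * A = int p ^ b * B" "\<not> int p dvd A" "\<not> int p dvd B"
  shows "a = b \<and> A = B"
proof -
  have p0: "int p \<noteq> 0" using assms(1) by (simp add: prime_gt_0_nat)
  have ab: "a = b"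
  proof (rule ccontr)
    assume "a \<noteq> b"
    then consider "a < b" | "b < a" by linarith
    then show False
    proof cases
      case 1
      then have "int p ^ a * A = int p ^ a * (int p ^ (b - a) * B)"
        using assms(2) by (metis mult.assoc le_add_diff_inverse less_imp_le power_add)
      then have "A = int p ^ (b - a) * B" using p0 by simp
      then show False using assms(3) 1 by (metis dvd_mult2 dvd_power zero_less_diff dvd_refl)
    next
      case 2
      then have "int p ^ b * B = int p ^ b * (int p ^ (a - b) * A)"
        using assms(2) by (metis mult.assoc le_add_diff_inverse less_imp_le power_add)
      then have "B = int p ^ (a - b) * A" using p0 by simp
      then show False using assms(4) 2 by (metis dvd_mult2 dvd_power zero_less_diff dvd_refl)
    qed
  qed
  then show ?thesis using assms(2) p0 by simp
qed

lemma pe_sym: "pe p k x y \<Longrightarrow> pe p k y x"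
  unfolding pe_def using cong_sym by blast

lemma pe_one:
  assumes "prime p" shows "pe p k 1 1"
proof -
  have "p > 1" using assms by (rule prime_gt_1_nat)
  then have "\<not> int p dvd 1" by simp
  then show ?thesis unfolding pe_def
    by (intro exI[of _ 0] exI[of _ 1]) simp
qed

lemma not_dvd_mult_prime:
  assumes "prime p" "\<not> int p dvd U" "\<not> int p dvd U'"
  shows "\<not> int p dvd (U * U')"
proof -
  have "prime (int p)" using assms(1) by simp
  then show ?thesis using prime_dvd_mult_iff[of "int p" U U'] assms(2,3) by simp
qed

lemma pe_mult:
  assumes "prime p" "pe p k x y" "pe p k x' y'"
  shows "pe p k (x * x') (y * y')"
proof -
  obtain v U W where a: "x = int p ^ v * U" "y = int p ^ v * W" "\<not> int p dvd U" "\<not> int p dvd W"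
     "[U = W] (mod int p ^ k)" using assms(2) unfolding pe_def by blast
  obtain v' U' W' where b: "x' = int p ^ v' * U'" "y' = int p ^ v' * W'" "\<not> int p dvd U'" "\<not> int p dvd W'"
     "[U' = W'] (mod int p ^ k)" using assms(3) unfolding pe_def by blast
  show ?thesis unfolding pe_def
    apply (rule exI[of _ "v + v'"], rule exI[of _ "U * U'"], rule exI[of _ "W * W'"])
    using a b not_dvd_mult_prime[OF assms(1)] cong_mult
    by (auto simp: power_add algebra_simps)
qed

lemma pe_prod:
  assumes "prime p" "finite S" "\<And>d. d \<in> S \<Longrightarrow> pe p k (f d) (g d)"
  shows "pe p k (\<Prod>d\<in>S. f d) (\<Prod>d\<in>S. g d)"
  using assms(2,3)
proof (induction S rule: finite_induct)
  case empty
  then show ?case using pe_one[OF assms(1)] by simp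
next
  case (insert x F)
  then show ?case using pe_mult[OF assms(1)] by simp
qed

lemma pe_cancel:
  assumes "prime p" "pe p k (x * r) (y * s)" "pe p k r s"
  shows "pe p k x y"
proof -
  obtain v U W where a: "x * r = int p ^ v * U" "y * s = int p ^ v * W" "\<not> int p dvd U" "\<not> int p dvd W"
     "[U = W] (mod int p ^ k)" using assms(2) unfolding pe_def by blast
  obtain w U' W' where b: "r = int p ^ w * U'" "s = int p ^ w * W'" "\<not> int p dvd U'" "\<not> int p dvd W'"
     "[U' = W'] (mod int p ^ k)" using assms(3) unfolding pe_def by blast
  have "U \<noteq> 0" "W \<noteq> 0" using a by auto
  moreover have "int p ^ v \<noteq> 0" using prime_gt_0_nat[OF assms(1)] by simp
  ultimately have "x \<noteq> 0" "y \<noteq> 0" using a by auto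
  obtain e X where x: "x = int p ^ e * X" "\<not> int p dvd X"
    using decomp[OF assms(1) \<open>x \<noteq> 0\<close>] by blast
  obtain f Y where y: "y = int p ^ f * Y" "\<not> int p dvd Y"
    using decomp[OF assms(1) \<open>y \<noteq> 0\<close>] by blast
  have "int p ^ (e + w) * (X * U') = int p ^ v * U" using a(1) x b(1) by (simp add: power_add algebra_simps)
  then have 1: "e + w = v" "X * U' = U"
    using decomp_unique[OF assms(1)] a(3) not_dvd_mult_prime[OF assms(1) x(2) b(3)] by blast+
  have "int p ^ (f + w) * (Y * W') = int p ^ v * W" using a(2) y b(2) by (simp add: power_add algebra_simps)
  then have 2: "f + w = v" "Y * W' = W"
    using decomp_unique[OF assms(1)] a(4) not_dvd_mult_prime[OF assms(1) y(2) b(4)] by blast+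
  have "[X * U' = Y * W'] (mod int p ^ k)" using 1 2 a(5) by simp
  moreover have "[Y * W' = Y * U'] (mod int p ^ k)" by (rule cong_scalar_left[OF cong_sym[OF b(5)], of Y])
  ultimately have "[X * U' = Y * U'] (mod int p ^ k)" using cong_trans by blast
  moreover have "coprime U' (int p ^ k)"
  proof -
    have "prime (int p)" using assms(1) by simp
    then have "coprime (int p) U'" using prime_imp_coprime b(3) by blast
    then show ?thesis by (simp add: coprime_commute)
  qed
  ultimately have "[X = Y] (mod int p ^ k)" using cong_mult_rcancel by blast
  moreover have "e = f" using 1(1) 2(1) by simp
  ultimately show ?thesis unfolding pe_def
    by (intro exI[of _ e] exI[of _ X] exI[of _ Y]) (simp add: x y)
qed

lemma pe_dvd:
  assumes "pe p k x y" shows "int p ^ k dvd x - y"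
proof -
  obtain v U W where a: "x = int p ^ v * U" "y = int p ^ v * W" "[U = W] (mod int p ^ k)"
    using assms unfolding pe_def by blast
  have "int p ^ k dvd U - W" using a(3) by (simp add: cong_iff_dvd_diff cong_sym_eq)
  then have "int p ^ k dvd int p ^ v * (U - W)" by simp
  then show ?thesis using a by (simp add: algebra_simps)
qed

lemma pe_refl:
  assumes "prime p" "x \<noteq> 0" shows "pe p k x x"
  using decomp[OF assms] unfolding pe_def by (blast intro: cong_refl)

lemma mu_1: "moebius_mu 1 = 1"
  by (simp add: moebius_mu_def)

lemma mu_p: "prime p \<Longrightarrow> moebius_mu p = -1"
  by (simp add: moebius_mu_def squarefree_prime prime_prime_factors)

lemma mu_cases: "moebius_mu d = 0 \<or> moebius_mu d = 1 \<or> moebius_mu d = -1"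
  unfolding moebius_mu_def
  by (cases "even (card (prime_factors d))") (simp_all add: neg_one_even_power neg_one_odd_power)

lemma mu_sqf: "moebius_mu d \<noteq> 0 \<Longrightarrow> squarefree d"
  by (auto simp: moebius_mu_def split: if_splits)

lemma mu_mult_p:
  assumes "prime p" "\<not> p dvd e" "squarefree e"
  shows "squarefree (e * p) \<and> moebius_mu (e * p) = - moebius_mu e"
proof -
  have e0: "e \<noteq> 0" by (metis assms(3) not_squarefree_0)
  have p0: "p \<noteq> 0" using assms(1) by auto
  have cop: "coprime e p" using prime_imp_coprime[OF assms(1,2)] by (simp add: coprime_commute)
  have sq: "squarefree (e * p)" using squarefree_mult_coprime[OF cop assms(3) squarefree_prime[OF assms(1)]] .
  have "prime_factors (e * p) = insert p (prime_factors e)"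
    using prime_factors_product[OF e0 p0] prime_prime_factors[OF assms(1)] by auto
  moreover have "p \<notin> prime_factors e" using assms(2) by (auto simp: in_prime_factors_iff)
  ultimately have "card (prime_factors (e * p)) = Suc (card (prime_factors e))" by simp
  then show ?thesis using sq assms(3) by (simp add: moebius_mu_def)
qed

lemma sqf_pp:
  assumes "squarefree (d::nat)" "p * p dvd d" shows "p = 1"
proof -
  have "p ^ 2 dvd d" using assms(2) by (simp add: power2_eq_square)
  then have "is_unit p" using assms(1) unfolding squarefree_def by blast
  then show ?thesis by simp
qed

lemma pk_dvd:
  assumes "k \<ge> 1" "p ^ k dvd (n::nat)" shows "p dvd n"
proof -
  have "p dvd p ^ k" using assms(1) by (intro dvd_power) simp
  then show ?thesis using assms(2) by (rule dvd_trans)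
qed

definition phi :: "nat \<Rightarrow> nat \<Rightarrow> nat" where
  "phi p d = (if p dvd d then d div p else d * p)"

lemma phi_props:
  assumes "prime p" "p dvd n" "n > 0" "d dvd n" "squarefree d"
  shows "phi p d dvd n \<and> squarefree (phi p d) \<and> moebius_mu (phi p d) = - moebius_mu d
     \<and> phi p (phi p d) = d"
proof (cases "p dvd d")
  case True
  then obtain e where d: "d = e * p" by (metis dvd_div_mult_self)
  have p1: "p > 1" using assms(1) prime_gt_1_nat by blast
  have ne: "\<not> p dvd e"
  proof
    assume "p dvd e"
    then have "p * p dvd d" using d by simp
    then show False using sqf_pp[OF assms(5)] p1 by auto
  qed
  have sqe: "squarefree e" using assms(5) d squarefree_multD by blast
  have "phi p d = e" using True d p1 by (simp add: phi_def)
  moreover have "phi p e = d" using ne d by (simp add: phi_def)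
  moreover have "e dvd n" using assms(4) d by (meson dvd_mult_left)
  ultimately show ?thesis using mu_mult_p[OF assms(1) ne sqe] d sqe by simp
next
  case False
  have p1: "p > 1" using assms(1) prime_gt_1_nat by blast
  have cop: "coprime d p" using prime_imp_coprime[OF assms(1) False] by (simp add: coprime_commute)
  have "d * p dvd n" using cop assms(2,4) by (simp add: divides_mult)
  moreover have "phi p d = d * p" using False by (simp add: phi_def)
  moreover have "phi p (d * p) = d" using p1 by (simp add: phi_def)
  ultimately show ?thesis using mu_mult_p[OF assms(1) False assms(5)] by simp
qed

lemma phi_bij:
  assumes "prime p" "p dvd n" "n > 0"
  shows "bij_betw (phi p) {d. d dvd n \<and> moebius_mu d = 1} {d. d dvd n \<and> moebius_mu d = -1}"
proof -
  have P: "phi p d dvd n \<and> moebius_mu (phi p d) = - moebius_mu d \<and> phi p (phi p d) = d"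
    if "d dvd n" "moebius_mu d \<noteq> 0" for d
    using phi_props[OF assms that(1) mu_sqf[OF that(2)]] by simp
  show ?thesis
  proof (rule bij_betw_byWitness[where f' = "phi p"])
    show "\<forall>x\<in>{d. d dvd n \<and> moebius_mu d = 1}. phi p (phi p x) = x"
      using P by simp
    show "\<forall>x\<in>{d. d dvd n \<and> moebius_mu d = -1}. phi p (phi p x) = x"
      using P by simp
    show "phi p ` {d. d dvd n \<and> moebius_mu d = 1} \<subseteq> {d. d dvd n \<and> moebius_mu d = -1}"
    proof
      fix y assume "y \<in> phi p ` {d. d dvd n \<and> moebius_mu d = 1}"
      then obtain x where "x dvd n" "moebius_mu x = 1" "y = phi p x" by auto
      then show "y \<in> {d. d dvd n \<and> moebius_mu d = -1}" using P[of x] by simp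
    qed
    show "phi p ` {d. d dvd n \<and> moebius_mu d = -1} \<subseteq> {d. d dvd n \<and> moebius_mu d = 1}"
    proof
      fix y assume "y \<in> phi p ` {d. d dvd n \<and> moebius_mu d = -1}"
      then obtain x where "x dvd n" "moebius_mu x = -1" "y = phi p x" by auto
      then show "y \<in> {d. d dvd n \<and> moebius_mu d = 1}" using P[of x] by simp
    qed
  qed
qed

lemma seg_pe:
  assumes "strong_euler_gauss a" "prime p" "k \<ge> 1" "p ^ k dvd n" "n > 0"
  shows "pe p k (A_plus a n) (A_minus a n)"
proof -
  define g where "g = gcd (A_plus a n) (A_minus a n)"
  define P where "P = A_plus a n div g"
  define M where "M = A_minus a n div g"
  have H: "coprime P (int n) \<and> coprime M (int n) \<and> [inv_mod n M = inv_mod n P] (mod int n)"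
  proof -
    have n1: "n \<ge> 1" using assms(5) by simp
    note L = mp[OF spec[OF assms(1)[unfolded strong_euler_gauss_def], of n] n1]
    show ?thesis using L unfolding Let_def g_def P_def M_def by simp
  qed
  have p1: "p > 1" using assms(2) prime_gt_1_nat by blast
  have pn: "p dvd n" using assms(3,4) by (rule pk_dvd)
  then have n1: "n \<noteq> 1" using p1 by auto
  have pn': "int p dvd int n" using pn by simp
  have g0: "g \<noteq> 0"
  proof
    assume "g = 0"
    then have "P = 0" by (simp add: P_def)
    then have "is_unit (int n)" using H by simp
    then show False using n1 by simp
  qed
  have npu: "\<not> is_unit (int p)" using p1 by simp
  have nP: "\<not> int p dvd P"
  proof
    assume "int p dvd P"
    then have "is_unit (int p)" using coprime_common_divisor[of P "int n" "int p"] H pn' by simp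
    then show False using npu by simp
  qed
  have nM: "\<not> int p dvd M"
  proof
    assume "int p dvd M"
    then have "is_unit (int p)" using coprime_common_divisor[of M "int n" "int p"] H pn' by simp
    then show False using npu by simp
  qed
  define iM where "iM = inv_mod n M"
  define iP where "iP = inv_mod n P"
  have eM: "[M * iM = 1] (mod int n)"
  proof -
    have "\<exists>y. [M * y = 1] (mod int n)" using cong_solve_coprime_int H by blast
    then show ?thesis unfolding iM_def inv_mod_def by (rule someI_ex)
  qed
  have eP: "[P * iP = 1] (mod int n)"
  proof -
    have "\<exists>y. [P * y = 1] (mod int n)" using cong_solve_coprime_int H by blast
    then show ?thesis unfolding iP_def inv_mod_def by (rule someI_ex)
  qed
  have ii: "[iM = iP] (mod int n)" using H iM_def iP_def by simp
  have "[M * 1 = M * (P * iP)] (mod int n)" using cong_sym[OF cong_scalar_left[OF eP, of M]] by simp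
  also have "M * (P * iP) = P * (M * iP)" by simp
  also have "[P * (M * iP) = P * (M * iM)] (mod int n)" by (rule cong_scalar_left[OF cong_scalar_left[OF cong_sym[OF ii], of M], of P])
  also have "[P * (M * iM) = P * 1] (mod int n)" using cong_scalar_left[OF eM, of P] by simp
  finally have PM: "[M = P] (mod int n)" by simp
  have "int (p ^ k) dvd int n" using assms(4) by (simp only: of_nat_dvd_iff)
  then have "int p ^ k dvd int n" by simp
  then have "[M = P] (mod int p ^ k)" by (rule cong_dvd_modulus[OF PM])
  then have PMk: "[P = M] (mod int p ^ k)" by (rule cong_sym)
  have "pe p k P M" unfolding pe_def
    by (rule exI[of _ 0], rule exI[of _ P], rule exI[of _ M]) (use nP nM PMk in simp)
  then have "pe p k (g * P) (g * M)" by (rule pe_mult[OF assms(2) pe_refl[OF assms(2) g0]])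
  moreover have "g * P = A_plus a n" unfolding P_def g_def by simp
  moreover have "g * M = A_minus a n" unfolding M_def g_def by simp
  ultimately show ?thesis by simp
qed

lemma pair:
  assumes "prime p" "k \<ge> 1" "0 < n" "p ^ k dvd n" "d dvd n" "moebius_mu d = 1" "d \<noteq> 1"
    and IH: "\<And>N. N < n \<Longrightarrow> 0 < N \<Longrightarrow> p ^ k dvd N \<Longrightarrow> pe p k (a N) (a (N div p))"
  shows "pe p k (a (n div d)) (a (n div phi p d))"
proof -
  have sq: "squarefree d" using assms(6) mu_sqf by simp
  have p1: "p > 1" using assms(1) prime_gt_1_nat by blast
  show ?thesis
  proof (cases "p dvd d")
    case True
    then obtain e where d: "d = e * p" by (metis dvd_div_mult_self)
    have ne: "\<not> p dvd e"
    proof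
      assume "p dvd e"
      then have "p * p dvd d" using d by simp
      then show False using sqf_pp[OF sq] p1 by auto
    qed
    have e1: "e \<noteq> 1" using d assms(6) mu_p[OF assms(1)] by auto
    have e0: "e \<noteq> 0" using d assms(5) assms(3) by auto
    have ed: "e dvd n" using assms(5) d by (meson dvd_mult_left)
    define N where "N = n div e"
    have nN: "n = e * N" using ed N_def by simp
    have Nlt: "N < n" using N_def e1 e0 assms(3) by simp
    have N0: "0 < N" using nN assms(3) by (cases N) simp_all
    have "coprime (p ^ k) e" using prime_imp_coprime[OF assms(1) ne] by simp
    moreover have "p ^ k dvd e * N" using assms(4) nN by simp
    ultimately have pkN: "p ^ k dvd N" by (simp add: coprime_dvd_mult_right_iff)
    have "N div p = n div d" using N_def d by (simp add: div_mult2_eq)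
    moreover have "phi p d = e" using True d p1 by (simp add: phi_def)
    ultimately have "pe p k (a (n div phi p d)) (a (n div d))" using IH[OF Nlt N0 pkN] N_def by simp
    then show ?thesis by (rule pe_sym)
  next
    case False
    have d0: "d \<noteq> 0" using assms(5) assms(3) by auto
    define N where "N = n div d"
    have nN: "n = d * N" using assms(5) N_def by simp
    have Nlt: "N < n" using N_def assms(7) d0 assms(3) by simp
    have N0: "0 < N" using nN assms(3) by (cases N) simp_all
    have "coprime (p ^ k) d" using prime_imp_coprime[OF assms(1) False] by simp
    moreover have "p ^ k dvd d * N" using assms(4) nN by simp
    ultimately have pkN: "p ^ k dvd N" by (simp add: coprime_dvd_mult_right_iff)
    have "N div p = n div (d * p)" using N_def by (simp add: div_mult2_eq)
    moreover have "phi p d = d * p" using False by (simp add: phi_def)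
    ultimately show ?thesis using IH[OF Nlt N0 pkN] N_def by simp
  qed
qed

lemma claim:
  assumes SEG: "strong_euler_gauss a" and p: "prime p" and k: "k \<ge> 1"
  shows "0 < n \<Longrightarrow> p ^ k dvd n \<Longrightarrow> pe p k (a n) (a (n div p))"
proof (induction n rule: less_induct)
  case (less n)
  define Dp where "Dp = {d. d dvd n \<and> moebius_mu d = 1}"
  have p1: "p > 1" using p prime_gt_1_nat by blast
  have pn: "p dvd n" using k less.prems(2) by (rule pk_dvd)
  have fin: "finite Dp" unfolding Dp_def using less.prems(1) by (auto intro: finite_subset)
  have "moebius_mu 1 = 1" by (rule mu_1)
  then have one: "1 \<in> Dp" unfolding Dp_def by simp
  have phi1: "phi p 1 = p" using p1 by (simp add: phi_def)
  have "A_minus a n = (\<Prod>d\<in>Dp. a (n div phi p d))"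
    unfolding A_minus_def Dp_def
    using prod.reindex_bij_betw[OF phi_bij[OF p pn less.prems(1)], of "\<lambda>d. a (n div d)"] by simp
  also have "\<dots> = a (n div p) * (\<Prod>d\<in>Dp - {1}. a (n div phi p d))"
    using prod.remove[OF fin one, of "\<lambda>d. a (n div phi p d)"] phi1 by simp
  finally have Am: "A_minus a n = a (n div p) * (\<Prod>d\<in>Dp - {1}. a (n div phi p d))" .
  have "A_plus a n = (\<Prod>d\<in>Dp. a (n div d))" unfolding A_plus_def Dp_def by simp
  also have "\<dots> = a n * (\<Prod>d\<in>Dp - {1}. a (n div d))"
    using prod.remove[OF fin one, of "\<lambda>d. a (n div d)"] by simp
  finally have Ap: "A_plus a n = a n * (\<Prod>d\<in>Dp - {1}. a (n div d))" .
  have rest: "pe p k (\<Prod>d\<in>Dp - {1}. a (n div d)) (\<Prod>d\<in>Dp - {1}. a (n div phi p d))"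
    apply (rule pe_prod[OF p])
    using fin apply simp
  proof -
    fix d assume "d \<in> Dp - {1}"
    then have "d dvd n" "moebius_mu d = 1" "d \<noteq> 1" unfolding Dp_def by auto
    then show "pe p k (a (n div d)) (a (n div phi p d))"
      by (rule pair[where a = a, OF p k less.prems(1) less.prems(2) _ _ _ less.IH])
  qed
  have "pe p k (A_plus a n) (A_minus a n)" using seg_pe[OF SEG p k less.prems(2) less.prems(1)] .
  then have "pe p k (a n * (\<Prod>d\<in>Dp - {1}. a (n div d))) (a (n div p) * (\<Prod>d\<in>Dp - {1}. a (n div phi p d)))"
    unfolding Ap Am .
  then show ?case using pe_cancel[OF p _ rest] by blast
qed

lemma gauss_pk:
  assumes SEG: "strong_euler_gauss a" and p: "prime p" and "p ^ k dvd n" "n > 0"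
  shows "int p ^ k dvd (\<Sum>d | d dvd n. moebius_mu d * a (n div d))"
proof (cases "k = 0")
  case True
  then show ?thesis by simp
next
  case False
  then have k: "k \<ge> 1" by simp
  have p1: "p > 1" using p prime_gt_1_nat by blast
  have pn: "p dvd n" using k assms(3) by (rule pk_dvd)
  define Dp where "Dp = {d. d dvd n \<and> moebius_mu d = 1}"
  define Dm where "Dm = {d. d dvd n \<and> moebius_mu d = -1}"
  define f where "f d = a (n div d)" for d
  have finD: "finite {d. d dvd n}" using assms(4) by simp
  have finp: "finite Dp" "finite Dm" unfolding Dp_def Dm_def using finD by (auto intro: finite_subset)
  have "(\<Sum>d | d dvd n. moebius_mu d * a (n div d)) = (\<Sum>d\<in>Dp \<union> Dm. moebius_mu d * f d)"
    by (rule sum.mono_neutral_cong_right) (use finD mu_cases in \<open>auto simp: Dp_def Dm_def f_def\<close>)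
  also have "\<dots> = (\<Sum>d\<in>Dp. moebius_mu d * f d) + (\<Sum>d\<in>Dm. moebius_mu d * f d)"
    by (rule sum.union_disjoint) (use finp in \<open>auto simp: Dp_def Dm_def\<close>)
  also have "(\<Sum>d\<in>Dp. moebius_mu d * f d) = (\<Sum>d\<in>Dp. f d)" by (simp add: Dp_def)
  also have "(\<Sum>d\<in>Dm. moebius_mu d * f d) = - (\<Sum>d\<in>Dm. f d)" by (simp add: Dm_def sum_negf)
  also have "(\<Sum>d\<in>Dm. f d) = (\<Sum>d\<in>Dp. f (phi p d))"
    using sum.reindex_bij_betw[OF phi_bij[OF p pn assms(4)], of f] unfolding Dp_def Dm_def by simp
  finally have S: "(\<Sum>d | d dvd n. moebius_mu d * a (n div d)) = (\<Sum>d\<in>Dp. f d - f (phi p d))"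
    by (simp add: sum_subtractf)
  have "int p ^ k dvd f d - f (phi p d)" if "d \<in> Dp" for d
  proof (cases "d = 1")
    case True
    have "phi p 1 = p" using p1 by (simp add: phi_def)
    then show ?thesis using True claim[OF SEG p k assms(4,3)] pe_dvd unfolding f_def by simp
  next
    case False
    have "pe p k (a (n div d)) (a (n div phi p d))"
    proof (rule pair[where a = a, OF p k assms(4,3) _ _ False])
      show "d dvd n" "moebius_mu d = 1" using that unfolding Dp_def by auto
      fix N :: nat assume "N < n" "0 < N" "p ^ k dvd N"
      then show "pe p k (a N) (a (N div p))" using claim[OF SEG p k] by blast
    qed
    then show ?thesis using pe_dvd unfolding f_def by blast
  qed
  then show ?thesis unfolding S by (rule dvd_sum)
qed

theorem theorem2:
  fixes a :: "nat \<Rightarrow> int"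
  assumes "strong_euler_gauss a"
  shows "gauss_sequence a"
  unfolding gauss_sequence_def
proof (intro allI impI)
  fix n :: nat
  assume n1: "n \<ge> 1"
  define S where "S = (\<Sum>d | d dvd n. moebius_mu d * a (n div d))"
  have "int n dvd S"
  proof (cases "S = 0")
    case True then show ?thesis by simp
  next
    case S0: False
    show ?thesis
  proof (rule multiplicity_le_imp_dvd)
    show "int n \<noteq> 0" using n1 by simp
    fix q :: int
    assume q: "prime q"
    define k where "k = multiplicity q (int n)"
    have q0: "q = int (nat q)" using prime_ge_0_int[OF q] by simp
    have qn: "prime (nat q)" using q q0 by (metis prime_nat_int_transfer)
    have "q ^ k dvd int n" unfolding k_def by (rule multiplicity_dvd)
    then have "int (nat q ^ k) dvd int n" using q0 by (metis of_nat_power)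
    then have "nat q ^ k dvd n" by (simp only: of_nat_dvd_iff)
    then have "int (nat q) ^ k dvd S" unfolding S_def using gauss_pk[OF assms qn] n1 by simp
    then have "q ^ k dvd S" using q0 by simp
    moreover have nu: "\<not> is_unit q" using q not_prime_unit by blast
    ultimately show "multiplicity q (int n) \<le> multiplicity q S"
      using multiplicity_geI[OF S0 nu] k_def by blast
  qed
  qed
  then show "[(\<Sum>d | d dvd n. moebius_mu d * a (n div d)) = 0] (mod int n)"
    unfolding S_def by (simp add: cong_0_iff)
qed

end
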